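(* Let $G$ be a finite group. Then $G$ is an elementary abelian $3$-group if and only if all of the following hold: (a) for every maximal subgroup $M$ of $G$, the non-trivial cosets of $M$ in $G$ are exactly two sets, and each of them is a maximal sum-free set in $G$; (b) every maximal sum-free set in $G$ is a non-trivial coset of some maximal subgroup of $G$; (c) $\Phi(G)=1$, where $\Phi(G)$ denotes the Frattini subgroup of $G$ (the intersection of all maximal subgroups of $G$).
   Context: A non-empty subset $S$ of a group $G$ is called sum-free if for all $s_1,s_2\in S$ (including the case $s_1=s_2$) one has $s_1s_2\notin S$. A maximal sum-free set in a finite group $G$ means a sum-free set of largest possible cardinality among all sum-free sets in $G$ (maximal by cardinality). A non-trivial coset of a subgroup $H$ is a coset $gH$ with $g\notin H$. *)

theory Defs
  imports "HOL-Algebra.Algebra"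
begin

definition sum_free :: "('a, 'b) monoid_scheme \<Rightarrow> 'a set \<Rightarrow> bool" where
  "sum_free G S \<longleftrightarrow> S \<noteq> {} \<and> S \<subseteq> carrier G \<and>
     (\<forall>s1\<in>S. \<forall>s2\<in>S. s1 \<otimes>\<^bsub>G\<^esub> s2 \<notin> S)"

definition max_sum_free :: "('a, 'b) monoid_scheme \<Rightarrow> 'a set \<Rightarrow> bool" where
  "max_sum_free G S \<longleftrightarrow> sum_free G S \<and> (\<forall>T. sum_free G T \<longrightarrow> card T \<le> card S)"

definition maximal_subgroup :: "('a, 'b) monoid_scheme \<Rightarrow> 'a set \<Rightarrow> bool" where
  "maximal_subgroup G M \<longleftrightarrow> subgroup M G \<and> M \<noteq> carrier G \<and>
     (\<forall>H. subgroup H G \<and> M \<subseteq> H \<longrightarrow> H = M \<or> H = carrier G)"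

text \<open>Frattini subgroup: intersection of all maximal subgroups (the whole group if there are none).\<close>
definition frattini :: "('a, 'b) monoid_scheme \<Rightarrow> 'a set" where
  "frattini G = carrier G \<inter> \<Inter>{M. maximal_subgroup G M}"

definition nontrivial_cosets :: "('a, 'b) monoid_scheme \<Rightarrow> 'a set \<Rightarrow> 'a set set" where
  "nontrivial_cosets G M = {g <#\<^bsub>G\<^esub> M | g. g \<in> carrier G \<and> g \<notin> M}"

definition elementary_abelian_3_group :: "('a, 'b) monoid_scheme \<Rightarrow> bool" where
  "elementary_abelian_3_group G \<longleftrightarrow> comm_group G \<and>
     (\<forall>x\<in>carrier G. x [^]\<^bsub>G\<^esub> (3::nat) = \<one>\<^bsub>G\<^esub>)"

end

theory Submission
  imports Defs
begin


definition even3 :: "('x \<Rightarrow> 'x) \<Rightarrow> 'x set \<Rightarrow> bool" where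
 "even3 f R \<longleftrightarrow> (\<forall>c\<in>R. f c = c) \<or> (\<forall>c\<in>R. f c \<noteq> c)"

lemma even3_cong: "(\<And>x. x \<in> R \<Longrightarrow> f x = f' x) \<Longrightarrow> even3 f R = even3 f' R"
  unfolding even3_def by auto

lemma even3_abc: "even3 f {a,b,c} \<longleftrightarrow> ((f a = a \<and> f b = b \<and> f c = c) \<or> (f a \<noteq> a \<and> f b \<noteq> b \<and> f c \<noteq> c))"
  unfolding even3_def by auto

lemma perm3_cases:
  assumes "a \<noteq> b" "b \<noteq> c" "a \<noteq> c" "f ` {a,b,c} \<subseteq> {a,b,c}" "inj_on f {a,b,c}"
  shows "(f a = a \<and> f b = b \<and> f c = c) \<or> (f a = b \<and> f b = c \<and> f c = a) \<or> (f a = c \<and> f b = a \<and> f c = b) \<or>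
         (f a = a \<and> f b = c \<and> f c = b) \<or> (f a = c \<and> f b = b \<and> f c = a) \<or> (f a = b \<and> f b = a \<and> f c = c)"
proof -
  have 1: "f a = a \<or> f a = b \<or> f a = c" "f b = a \<or> f b = b \<or> f b = c" "f c = a \<or> f c = b \<or> f c = c"
    using assms(4) by auto
  have 2: "f a \<noteq> f b" "f b \<noteq> f c" "f a \<noteq> f c" using assms(1-3) inj_onD[OF assms(5)] by blast+
  show ?thesis using 1 2 by (elim disjE; simp)
qed

lemma perm3:
  assumes "card R = 3" "f ` R \<subseteq> R" "inj_on f R" "g ` R \<subseteq> R" "inj_on g R"
  shows "(even3 f R \<longrightarrow> even3 g R \<longrightarrow> even3 (\<lambda>x. f (g x)) R) \<and>
         (\<not>even3 f R \<longrightarrow> \<not>even3 g R \<longrightarrow> even3 (\<lambda>x. f (g x)) R) \<and>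
         (even3 f R \<longrightarrow> \<not> even3 g R \<longrightarrow> \<not>even3 (\<lambda>x. f(g x)) R) \<and>
         (\<not>even3 f R \<longrightarrow> even3 g R \<longrightarrow> \<not>even3 (\<lambda>x. f(g x)) R) \<and>
         (even3 f R \<longrightarrow> even3 g R \<longrightarrow> (\<forall>x\<in>R. f (g x) = g (f x))) \<and>
         (even3 f R \<longrightarrow> (\<forall>x\<in>R. f (f (f x)) = x))"
proof -
  obtain a b c where R: "R = {a,b,c}" "a \<noteq> b" "b \<noteq> c" "a \<noteq> c"
    using assms(1) card_3_iff by metis
  have F: "(f a = a \<and> f b = b \<and> f c = c) \<or> (f a = b \<and> f b = c \<and> f c = a) \<or> (f a = c \<and> f b = a \<and> f c = b) \<or>
         (f a = a \<and> f b = c \<and> f c = b) \<or> (f a = c \<and> f b = b \<and> f c = a) \<or> (f a = b \<and> f b = a \<and> f c = c)"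
    using perm3_cases[of a b c f] R assms by simp
  have G: "(g a = a \<and> g b = b \<and> g c = c) \<or> (g a = b \<and> g b = c \<and> g c = a) \<or> (g a = c \<and> g b = a \<and> g c = b) \<or>
         (g a = a \<and> g b = c \<and> g c = b) \<or> (g a = c \<and> g b = b \<and> g c = a) \<or> (g a = b \<and> g b = a \<and> g c = c)"
    using perm3_cases[of a b c g] R assms by simp
  have X: "(((f a = a \<and> f b = b \<and> f c = c) \<or> (f a \<noteq> a \<and> f b \<noteq> b \<and> f c \<noteq> c)) \<longrightarrow>
         ((g a = a \<and> g b = b \<and> g c = c) \<or> (g a \<noteq> a \<and> g b \<noteq> b \<and> g c \<noteq> c)) \<longrightarrow>
         ((f (g a) = a \<and> f (g b) = b \<and> f (g c) = c) \<or> (f (g a) \<noteq> a \<and> f (g b) \<noteq> b \<and> f (g c) \<noteq> c))) \<and>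
       (\<not>((f a = a \<and> f b = b \<and> f c = c) \<or> (f a \<noteq> a \<and> f b \<noteq> b \<and> f c \<noteq> c)) \<longrightarrow>
         \<not>((g a = a \<and> g b = b \<and> g c = c) \<or> (g a \<noteq> a \<and> g b \<noteq> b \<and> g c \<noteq> c)) \<longrightarrow>
         ((f (g a) = a \<and> f (g b) = b \<and> f (g c) = c) \<or> (f (g a) \<noteq> a \<and> f (g b) \<noteq> b \<and> f (g c) \<noteq> c))) \<and>
       (((f a = a \<and> f b = b \<and> f c = c) \<or> (f a \<noteq> a \<and> f b \<noteq> b \<and> f c \<noteq> c)) \<longrightarrow>
         \<not>((g a = a \<and> g b = b \<and> g c = c) \<or> (g a \<noteq> a \<and> g b \<noteq> b \<and> g c \<noteq> c)) \<longrightarrow>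
         \<not>((f (g a) = a \<and> f (g b) = b \<and> f (g c) = c) \<or> (f (g a) \<noteq> a \<and> f (g b) \<noteq> b \<and> f (g c) \<noteq> c))) \<and>
       (\<not>((f a = a \<and> f b = b \<and> f c = c) \<or> (f a \<noteq> a \<and> f b \<noteq> b \<and> f c \<noteq> c)) \<longrightarrow>
         ((g a = a \<and> g b = b \<and> g c = c) \<or> (g a \<noteq> a \<and> g b \<noteq> b \<and> g c \<noteq> c)) \<longrightarrow>
         \<not>((f (g a) = a \<and> f (g b) = b \<and> f (g c) = c) \<or> (f (g a) \<noteq> a \<and> f (g b) \<noteq> b \<and> f (g c) \<noteq> c))) \<and>
       (((f a = a \<and> f b = b \<and> f c = c) \<or> (f a \<noteq> a \<and> f b \<noteq> b \<and> f c \<noteq> c)) \<longrightarrow>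
         ((g a = a \<and> g b = b \<and> g c = c) \<or> (g a \<noteq> a \<and> g b \<noteq> b \<and> g c \<noteq> c)) \<longrightarrow>
         (f (g a) = g (f a) \<and> f (g b) = g (f b) \<and> f (g c) = g (f c))) \<and>
       (((f a = a \<and> f b = b \<and> f c = c) \<or> (f a \<noteq> a \<and> f b \<noteq> b \<and> f c \<noteq> c)) \<longrightarrow>
         (f (f (f a)) = a \<and> f (f (f b)) = b \<and> f (f (f c)) = c))"
    using G F R by (elim disjE; simp add: R(2-4) R(2-4)[symmetric])
  show ?thesis unfolding R(1) even3_abc ball_simps using X by blast
qed

context group begin

lemma lcos_in_lcosets: "a \<in> carrier G \<Longrightarrow> a <# H \<in> lcosets H"
  unfolding LCOSETS_def by blast

lemma lcos_eq_iff:
  assumes "subgroup H G" "a \<in> carrier G" "b \<in> carrier G"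
  shows "a <# H = b <# H \<longleftrightarrow> inv a \<otimes> b \<in> H"
proof
  assume "a <# H = b <# H"
  then have "b \<in> a <# H" using lcos_self[OF assms(3,1)] by simp
  then show "inv a \<otimes> b \<in> H" using subgroup.lcos_module_imp[OF assms(1) is_group assms(2)] by blast
next
  assume "inv a \<otimes> b \<in> H"
  then have "b \<in> a <# H" using subgroup.lcos_module_rev[OF assms(1) is_group assms(2,3)] by blast
  then show "a <# H = b <# H" using l_repr_independence[OF _ assms(2,1)] by blast
qed

lemma one_lcos: "subgroup H G \<Longrightarrow> \<one> <# H = H"
  using lcos_mult_one subgroup.subset by blast

lemma lcos_eq_self_iff:
  assumes "subgroup H G" "a \<in> carrier G"
  shows "a <# H = H \<longleftrightarrow> a \<in> H"
proof -
  have "a <# H = H \<longleftrightarrow> a <# H = \<one> <# H" using one_lcos[OF assms(1)] by simp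
  also have "\<dots> \<longleftrightarrow> inv a \<in> H" using lcos_eq_iff[OF assms(1) assms(2) one_closed] assms by simp
  also have "\<dots> \<longleftrightarrow> a \<in> H" using assms by (metis inv_inv subgroup.m_inv_closed)
  finally show ?thesis .
qed

lemma card_lcos:
  assumes "finite (carrier G)" "subgroup H G" "a \<in> carrier G"
  shows "card (a <# H) = card H"
  using l_card_cosets_equal[OF lcos_in_lcosets[OF assms(3)] subgroup.subset[OF assms(2)] assms(1)] by simp

lemma lcosets_insert:
  assumes "subgroup H G"
  shows "lcosets H = insert H (nontrivial_cosets G H)" "H \<notin> nontrivial_cosets G H"
proof -
  show "lcosets H = insert H (nontrivial_cosets G H)"
  proof
    show "lcosets H \<subseteq> insert H (nontrivial_cosets G H)"
      unfolding LCOSETS_def nontrivial_cosets_def using lcos_eq_self_iff[OF assms] by blast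
    have "H \<in> lcosets H" by (metis lcos_in_lcosets one_closed one_lcos assms)
    then show "insert H (nontrivial_cosets G H) \<subseteq> lcosets H"
      unfolding nontrivial_cosets_def using lcos_in_lcosets by blast
  qed
  show "H \<notin> nontrivial_cosets G H"
    unfolding nontrivial_cosets_def using lcos_eq_self_iff[OF assms] by auto
qed

lemma order3:
  assumes "finite (carrier G)" "subgroup H G" "card (nontrivial_cosets G H) = 2"
  shows "card (carrier G) = 3 * card H"
proof -
  have "finite (nontrivial_cosets G H)"
    using assms(3) by (metis card.infinite zero_neq_numeral)
  then have "card (insert H (nontrivial_cosets G H)) = 3"
    using lcosets_insert(2)[OF assms(2)] assms(3) by (simp add: card_insert_if)
  then have "card (lcosets H) = 3" using lcosets_insert(1)[OF assms(2)] by simp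
  then show ?thesis using l_lagrange[OF assms(1,2)] by (simp add: order_def)
qed

lemma exists_maximal:
  assumes fin: "finite (carrier G)" and H: "subgroup H G" "H \<noteq> carrier G"
  shows "\<exists>M. maximal_subgroup G M \<and> H \<subseteq> M"
proof -
  define P where "P K \<longleftrightarrow> subgroup K G \<and> K \<noteq> carrier G \<and> H \<subseteq> K" for K
  have bnd: "\<forall>y. P y \<longrightarrow> card y < Suc (card (carrier G))"
  proof (intro allI impI)
    fix y assume "P y"
    then have "y \<subseteq> carrier G" unfolding P_def using subgroup.subset by blast
    then have "card y \<le> card (carrier G)" using fin by (rule card_mono[rotated])
    then show "card y < Suc (card (carrier G))" by simp
  qed
  have PH: "P H" using H unfolding P_def by simp
  obtain M where M: "P M" and Mmax: "\<forall>y. P y \<longrightarrow> card y \<le> card M"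
    using Lattices_Big.ex_has_greatest_nat[of P H card, OF PH bnd] by blast
  have "maximal_subgroup G M"
    unfolding maximal_subgroup_def
  proof (intro conjI allI impI)
    fix K assume K: "subgroup K G \<and> M \<subseteq> K"
    show "K = M \<or> K = carrier G"
    proof (cases "K = carrier G")
      case False
      then have "P K" using K M unfolding P_def by blast
      then have "card K \<le> card M" using Mmax by blast
      moreover have "finite K" using K fin by (meson finite_subset subgroup.subset)
      ultimately show ?thesis using K card_seteq by blast
    qed simp
  qed (use M in \<open>auto simp: P_def\<close>)
  then show ?thesis using M unfolding P_def by blast
qed

lemma sum_free_coset:
  assumes "subgroup H G" "g \<in> carrier G" "g \<notin> H"
  shows "sum_free G (g <# H)"
  unfolding sum_free_def
proof (intro conjI ballI)
  show "g <# H \<noteq> {}" using lcos_self[OF assms(2,1)] by auto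
  show "g <# H \<subseteq> carrier G" using l_coset_subset_G assms subgroup.subset by blast
  fix s1 s2 assume s: "s1 \<in> g <# H" "s2 \<in> g <# H"
  then obtain h1 h2 where h: "h1 \<in> H" "h2 \<in> H" "s1 = g \<otimes> h1" "s2 = g \<otimes> h2"
    unfolding l_coset_def by auto
  have hc: "h1 \<in> carrier G" "h2 \<in> carrier G" using h subgroup.mem_carrier[OF assms(1)] by auto
  show "s1 \<otimes> s2 \<notin> g <# H"
  proof
    assume "s1 \<otimes> s2 \<in> g <# H"
    then obtain h3 where h3: "h3 \<in> H" "s1 \<otimes> s2 = g \<otimes> h3" unfolding l_coset_def by auto
    have h3c: "h3 \<in> carrier G" using h3 subgroup.mem_carrier[OF assms(1)] by auto
    have "g \<otimes> (h1 \<otimes> g \<otimes> h2) = g \<otimes> h3" using h3 h hc assms(2) by (simp add: m_assoc)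
    then have "h1 \<otimes> g \<otimes> h2 = h3" using hc h3c assms(2) by (metis l_cancel m_closed)
    then have "g = inv h1 \<otimes> h3 \<otimes> inv h2" using hc h3c assms(2)
      by (metis inv_solve_left inv_solve_right m_closed inv_closed m_assoc)
    moreover have "inv h1 \<otimes> h3 \<otimes> inv h2 \<in> H"
      using h h3 assms(1) by (simp add: subgroup.m_closed subgroup.m_inv_closed)
    ultimately show False using assms(3) by simp
  qed
qed


lemma lcos_act_in:
  assumes "subgroup M G" "g \<in> carrier G" "C \<in> lcosets M"
  shows "g <# C \<in> lcosets M"
proof -
  obtain a where a: "a \<in> carrier G" "C = a <# M" using assms(3) unfolding LCOSETS_def by auto
  have "g <# C = (g \<otimes> a) <# M" using lcos_m_assoc[OF subgroup.subset[OF assms(1)] assms(2) a(1)] a(2) by simp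
  then show ?thesis by (simp add: lcos_in_lcosets a(1) assms(2))
qed

lemma lcos_act_assoc:
  assumes "subgroup M G" "g \<in> carrier G" "h \<in> carrier G" "C \<in> lcosets M"
  shows "(g \<otimes> h) <# C = g <# (h <# C)"
  using lcos_m_assoc[of C g h] subgroup.lcosets_carrier[OF assms(1) is_group assms(4)] assms by simp

lemma lcos_act_one:
  assumes "subgroup M G" "C \<in> lcosets M"
  shows "\<one> <# C = C"
  using lcos_mult_one subgroup.lcosets_carrier[OF assms(1) is_group assms(2)] by blast

lemma lcos_act_inv:
  assumes "subgroup M G" "g \<in> carrier G" "C \<in> lcosets M"
  shows "inv g <# (g <# C) = C" "g <# (inv g <# C) = C"
proof -
  have ig: "inv g \<in> carrier G" using assms(2) by simp
  have "inv g <# (g <# C) = (inv g \<otimes> g) <# C" using lcos_act_assoc[OF assms(1) ig assms(2) assms(3)] by (rule sym)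
  also have "\<dots> = \<one> <# C" using assms(2) by simp
  also have "\<dots> = C" by (rule lcos_act_one[OF assms(1,3)])
  finally show "inv g <# (g <# C) = C" .
  have "g <# (inv g <# C) = (g \<otimes> inv g) <# C" using lcos_act_assoc[OF assms(1) assms(2) ig assms(3)] by (rule sym)
  also have "\<dots> = \<one> <# C" using assms(2) by simp
  also have "\<dots> = C" by (rule lcos_act_one[OF assms(1,3)])
  finally show "g <# (inv g <# C) = C" .
qed

lemma lcos_act_inj:
  assumes "subgroup M G" "g \<in> carrier G"
  shows "inj_on (\<lambda>C. g <# C) (lcosets M)"
proof (rule inj_onI)
  fix C D assume CD: "C \<in> lcosets M" "D \<in> lcosets M" "g <# C = g <# D"
  have "C = inv g <# (g <# C)" using lcos_act_inv(1)[OF assms CD(1)] by simp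
  also have "\<dots> = inv g <# (g <# D)" using CD(3) by simp
  also have "\<dots> = D" using lcos_act_inv(1)[OF assms CD(2)] .
  finally show "C = D" .
qed

lemma lcos_act_img:
  assumes "subgroup M G" "g \<in> carrier G"
  shows "(\<lambda>C. g <# C) ` (lcosets M) \<subseteq> lcosets M"
  using lcos_act_in[OF assms] by blast

lemma key_max:
  assumes fin: "finite (carrier G)"
    and A: "\<forall>M. maximal_subgroup G M \<longrightarrow> card (nontrivial_cosets G M) = 2"
    and M: "maximal_subgroup G M"
  shows "(\<forall>x\<in>carrier G. x [^] (3::nat) \<in> M) \<and>
         (\<forall>x\<in>carrier G. \<forall>y\<in>carrier G. x \<otimes> y \<otimes> inv x \<otimes> inv y \<in> M)"
proof -
  have sM: "subgroup M G" using M maximal_subgroup_def by blast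
  define R where "R = lcosets M"
  have fnt: "finite (nontrivial_cosets G M)" using A M card.infinite by fastforce
  have cR: "card R = 3" unfolding R_def using lcosets_insert[OF sM] A M fnt by simp
  have MR: "M \<in> R" unfolding R_def by (metis lcos_in_lcosets one_closed one_lcos sM)
  define ev where "ev g = even3 (\<lambda>C. g <# C) R" for g
  have P: "(ev g \<longrightarrow> ev h \<longrightarrow> ev (g \<otimes> h)) \<and>
         (\<not>ev g \<longrightarrow> \<not>ev h \<longrightarrow> ev (g \<otimes> h)) \<and>
         (ev g \<longrightarrow> \<not> ev h \<longrightarrow> \<not>ev (g \<otimes> h)) \<and>
         (\<not>ev g \<longrightarrow> ev h \<longrightarrow> \<not>ev (g \<otimes> h)) \<and>
         (ev g \<longrightarrow> ev h \<longrightarrow> (\<forall>C\<in>R. g <# (h <# C) = h <# (g <# C))) \<and>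
         (ev g \<longrightarrow> (\<forall>C\<in>R. g <# (g <# (g <# C)) = C))"
    if gh: "g \<in> carrier G" "h \<in> carrier G" for g h
  proof -
    have eq: "ev (g \<otimes> h) = even3 (\<lambda>C. g <# (h <# C)) R"
      unfolding ev_def R_def by (rule even3_cong) (use lcos_act_assoc[OF sM gh] in auto)
    have ig: "(\<lambda>C. g <# C) ` R \<subseteq> R" "inj_on (\<lambda>C. g <# C) R"
      using lcos_act_img[OF sM gh(1)] lcos_act_inj[OF sM gh(1)] R_def by auto
    have ih: "(\<lambda>C. h <# C) ` R \<subseteq> R" "inj_on (\<lambda>C. h <# C) R"
      using lcos_act_img[OF sM gh(2)] lcos_act_inj[OF sM gh(2)] R_def by auto
    show ?thesis unfolding eq unfolding ev_def
      using perm3[OF cR ig ih] by simp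
  qed
  have ev1: "ev \<one>" unfolding ev_def even3_def R_def using lcos_act_one[OF sM] by blast
  have evinv: "ev (inv g) = ev g" if g: "g \<in> carrier G" for g
  proof -
    have a: "ev (inv x)" if "x \<in> carrier G" "ev x" for x
      using P[of "inv x" x] that ev1 by auto
    show ?thesis using a[of g] a[of "inv g"] g by auto
  qed
  have allev: "ev g" if g: "g \<in> carrier G" for g
  proof (rule ccontr)
    assume "\<not> ev g"
    define L where "L = {x \<in> carrier G. ev x}"
    have sL: "subgroup L G"
    proof (rule subgroupI)
      show "L \<subseteq> carrier G" "L \<noteq> {}" using ev1 L_def by auto
      show "inv a \<in> L" if "a \<in> L" for a using that evinv L_def by auto
      show "a \<otimes> b \<in> L" if "a \<in> L" "b \<in> L" for a b
      proof -
        have "a \<in> carrier G" "b \<in> carrier G" "ev a" "ev b" using that L_def by auto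
        then show ?thesis using P[of a b] L_def by auto
      qed
    qed
    have LG: "L \<noteq> carrier G" using \<open>\<not> ev g\<close> g L_def by blast
    obtain M' where M': "maximal_subgroup G M'" "L \<subseteq> M'" using exists_maximal[OF fin sL LG] by blast
    have sM': "subgroup M' G" using M' maximal_subgroup_def by blast
    have c3: "card (carrier G) = 3 * card M'" using order3[OF fin sM'] A M' by blast
    have "lcosets L \<subseteq> {L, g <# L}"
    proof
      fix C assume "C \<in> lcosets L"
      then obtain a where a: "a \<in> carrier G" "C = a <# L" unfolding LCOSETS_def by auto
      show "C \<in> {L, g <# L}"
      proof (cases "ev a")
        case True
        then show ?thesis using lcos_eq_self_iff[OF sL a(1)] a L_def by simp
      next
        case False
        then have "ev (inv g \<otimes> a)" using P[of "inv g" a] evinv[OF g] \<open>\<not> ev g\<close> a g by auto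
        then have "inv g \<otimes> a \<in> L" using L_def a g by auto
        then show ?thesis using lcos_eq_iff[OF sL g a(1)] a by simp
      qed
    qed
    then have "card (lcosets L) \<le> card {L, g <# L}" by (simp add: card_mono)
    also have "\<dots> \<le> 2" by (simp add: card_insert_if)
    finally have "card (lcosets L) \<le> 2" .
    then have "card (lcosets L) * card L \<le> 2 * card L" by (rule mult_le_mono1)
    then have "card (carrier G) \<le> 2 * card L" using l_lagrange[OF fin sL] by (simp add: order_def)
    also have "\<dots> \<le> 2 * card M'" 
      using M'(2) fin sM' by (metis card_mono finite_subset subgroup.subset mult_le_mono2)
    finally have "card M' = 0" using c3 by simp
    moreover have "finite M'" using fin sM' finite_subset subgroup.subset by metis
    ultimately show False using subgroup.one_closed[OF sM'] by auto
  qed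
  have MR': "M \<in> lcosets M" using MR R_def by simp
  have inR: "g <# C \<in> lcosets M" if "g \<in> carrier G" "C \<in> lcosets M" for g C
    using lcos_act_in[OF sM that] .
  have as: "(g \<otimes> h) <# C = g <# (h <# C)" if "g \<in> carrier G" "h \<in> carrier G" "C \<in> lcosets M" for g h C
    using lcos_act_assoc[OF sM that] .
  show ?thesis
  proof (intro conjI ballI)
    fix x assume x: "x \<in> carrier G"
    have "x [^] (3::nat) = x \<otimes> x \<otimes> x" using x by (simp add: numeral_3_eq_3)
    also have "\<dots> <# M = (x \<otimes> x) <# (x <# M)" using as[of "x \<otimes> x" x M] x MR' by simp
    also have "\<dots> = x <# (x <# (x <# M))" using as[of x x "x <# M"] x inR[OF x MR'] by simp
    also have "\<dots> = M"
    proof -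
      have "ev x" using allev[OF x] .
      then show ?thesis using P[OF x x] MR by blast
    qed
    finally have "(x [^] (3::nat)) <# M = M" .
    then show "x [^] (3::nat) \<in> M" using lcos_eq_self_iff[OF sM] x by (metis nat_pow_closed)
  next
    fix x y assume x: "x \<in> carrier G" and y: "y \<in> carrier G"
    have ix: "inv x \<in> carrier G" and iy: "inv y \<in> carrier G" using x y by auto
    have c1: "inv y <# M \<in> lcosets M" using inR[OF iy MR'] .
    have c2: "inv x <# (inv y <# M) \<in> lcosets M" using inR[OF ix c1] .
    have c3: "y <# (inv x <# (inv y <# M)) \<in> lcosets M" using inR[OF y c2] .
    have "(x \<otimes> y \<otimes> inv x \<otimes> inv y) <# M = (x \<otimes> y \<otimes> inv x) <# (inv y <# M)"
      using as[of "x \<otimes> y \<otimes> inv x" "inv y" M] x y MR' by simp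
    also have "\<dots> = (x \<otimes> y) <# (inv x <# (inv y <# M))"
      using as[of "x \<otimes> y" "inv x" "inv y <# M"] x y c1 by simp
    also have "\<dots> = x <# (y <# (inv x <# (inv y <# M)))"
      using as[of x y "inv x <# (inv y <# M)"] x y c2 by simp
    also have "y <# (inv x <# (inv y <# M)) = inv x <# (y <# (inv y <# M))"
    proof -
      have "ev y" "ev (inv x)" using allev y ix by auto
      then show ?thesis using P[OF y ix] c1 R_def by blast
    qed
    also have "y <# (inv y <# M) = M" using lcos_act_inv(2)[OF sM y MR'] .
    also have "x <# (inv x <# M) = M" using lcos_act_inv(2)[OF sM x MR'] .
    finally have "(x \<otimes> y \<otimes> inv x \<otimes> inv y) <# M = M" .
    then show "x \<otimes> y \<otimes> inv x \<otimes> inv y \<in> M" using lcos_eq_self_iff[OF sM] x y ix iy by (metis m_closed)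
  qed
qed

end



lemma (in group) subgroup_pow_closed:
  assumes "subgroup H G" "h \<in> H" shows "h [^] (n::nat) \<in> H"
proof (induction n)
  case 0 then show ?case using subgroup.one_closed[OF assms(1)] by simp
next
  case (Suc n) then show ?case using subgroup.m_closed[OF assms(1)] assms(2) by simp
qed

locale exp3_group = comm_group G for G (structure) +
  assumes fin: "finite (carrier G)"
  and cube: "x \<in> carrier G \<Longrightarrow> x [^] (3::nat) = \<one>"
begin

lemma cube': "x \<in> carrier G \<Longrightarrow> x \<otimes> x \<otimes> x = \<one>"
  using cube[of x] by (simp add: numeral_3_eq_3)

lemma inv_sq: "x \<in> carrier G \<Longrightarrow> inv x = x \<otimes> x"
proof -
  assume x: "x \<in> carrier G"
  have "(x \<otimes> x) \<otimes> x = \<one>" using cube'[OF x] .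
  then show ?thesis using x by (intro inv_equality) auto
qed

lemma four: "x \<in> carrier G \<Longrightarrow> x \<otimes> x \<otimes> (x \<otimes> x) = x"
proof -
  assume x: "x \<in> carrier G"
  have "x \<otimes> x \<otimes> (x \<otimes> x) = (x \<otimes> x \<otimes> x) \<otimes> x" using x by (simp add: m_assoc)
  then show ?thesis using cube'[OF x] x by simp
qed

lemma pow_mod3: "x \<in> carrier G \<Longrightarrow> x [^] (n::nat) = x [^] (n mod 3)"
proof -
  assume x: "x \<in> carrier G"
  have e: "n = 3 * (n div 3) + n mod 3" by simp
  have "x [^] n = x [^] (3 * (n div 3) + n mod 3)" using arg_cong[OF e, of "\<lambda>n. x [^] n"] .
  also have "\<dots> = x [^] (3 * (n div 3)) \<otimes> x [^] (n mod 3)" by (rule nat_pow_mult[OF x, symmetric])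
  also have "x [^] (3 * (n div 3)) = (x [^] (3::nat)) [^] (n div 3)" by (rule nat_pow_pow[OF x, symmetric])
  also have "\<dots> = \<one>" using cube[OF x] by simp
  finally show ?thesis using x by simp
qed

definition J :: "'a set \<Rightarrow> 'a \<Rightarrow> 'a set" where
  "J M k = {k [^] (i::nat) \<otimes> m | i m. m \<in> M}"

lemma J_subgroup:
  assumes M: "subgroup M G" and k: "k \<in> carrier G"
  shows "subgroup (J M k) G"
proof (rule subgroupI)
  have Mc: "\<And>m. m \<in> M \<Longrightarrow> m \<in> carrier G" using subgroup.mem_carrier[OF M] .
  show "J M k \<subseteq> carrier G" unfolding J_def using Mc k by auto
  have "k [^] (0::nat) \<otimes> \<one> \<in> J M k" unfolding J_def using subgroup.one_closed[OF M] by blast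
  then show "J M k \<noteq> {}" by blast
  fix a assume "a \<in> J M k"
  then obtain i m where a: "a = k [^] (i::nat) \<otimes> m" "m \<in> M" unfolding J_def by blast
  have "inv a = inv (k [^] i) \<otimes> inv m" using a Mc k by (simp add: inv_mult)
  also have "inv (k [^] i) = k [^] (i + i)" using inv_sq[of "k [^] i"] k by (simp add: nat_pow_mult)
  finally have "inv a = k [^] (i + i) \<otimes> inv m" .
  then show "inv a \<in> J M k" unfolding J_def using subgroup.m_inv_closed[OF M a(2)] by blast
next
  have Mc: "\<And>m. m \<in> M \<Longrightarrow> m \<in> carrier G" using subgroup.mem_carrier[OF M] .
  fix a b assume "a \<in> J M k" "b \<in> J M k"
  then obtain i m j n where a: "a = k [^] (i::nat) \<otimes> m" "m \<in> M" and b: "b = k [^] (j::nat) \<otimes> n" "n \<in> M"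
    unfolding J_def by blast
  have "a \<otimes> b = (k [^] i \<otimes> k [^] j) \<otimes> (m \<otimes> n)" using a b Mc k by (simp add: m_ac)
  also have "\<dots> = k [^] (i + j) \<otimes> (m \<otimes> n)" using k by (simp add: nat_pow_mult)
  finally show "a \<otimes> b \<in> J M k" unfolding J_def using subgroup.m_closed[OF M a(2) b(2)] by blast
qed

lemma M_sub_J: "subgroup M G \<Longrightarrow> M \<subseteq> J M k"
proof
  fix m assume "subgroup M G" "m \<in> M"
  then have "m = k [^] (0::nat) \<otimes> m" using subgroup.mem_carrier by fastforce
  then show "m \<in> J M k" unfolding J_def using \<open>m \<in> M\<close> by blast
qed

lemma k_in_J: "subgroup M G \<Longrightarrow> k \<in> carrier G \<Longrightarrow> k \<in> J M k"
proof -
  assume M: "subgroup M G" and k: "k \<in> carrier G"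
  have "k = k [^] (1::nat) \<otimes> \<one>" using k by simp
  then show ?thesis unfolding J_def using subgroup.one_closed[OF M] by blast
qed

lemma J_sub: "subgroup K G \<Longrightarrow> M \<subseteq> K \<Longrightarrow> k \<in> K \<Longrightarrow> J M k \<subseteq> K"
proof
  fix x assume K: "subgroup K G" "M \<subseteq> K" "k \<in> K" and "x \<in> J M k"
  then obtain i m where x: "x = k [^] (i::nat) \<otimes> m" "m \<in> M" unfolding J_def by blast
  have "k [^] i \<in> K" by (rule subgroup_pow_closed[OF K(1) K(3)])
  moreover have "m \<in> K" using x K by blast
  ultimately show "x \<in> K" using x subgroup.m_closed[OF K(1)] by simp
qed


lemma sq_notin: "subgroup M G \<Longrightarrow> x \<in> carrier G \<Longrightarrow> x \<notin> M \<Longrightarrow> x \<otimes> x \<notin> M"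
proof
  assume M: "subgroup M G" and x: "x \<in> carrier G" "x \<notin> M" and xx: "x \<otimes> x \<in> M"
  have "x \<otimes> x \<otimes> (x \<otimes> x) \<in> M" using subgroup.m_closed[OF M xx xx] .
  then show False using four[OF x(1)] x(2) by simp
qed

lemma lcos_distinct:
  assumes M: "subgroup M G" and x: "x \<in> carrier G" "x \<notin> M"
  shows "x <# M \<noteq> M" "(x \<otimes> x) <# M \<noteq> M" "x <# M \<noteq> (x \<otimes> x) <# M"
proof -
  show "x <# M \<noteq> M" using lcos_eq_self_iff[OF M x(1)] x(2) by simp
  show "(x \<otimes> x) <# M \<noteq> M" using lcos_eq_self_iff[OF M] x sq_notin[OF M x] by simp
  have "inv x \<otimes> (x \<otimes> x) = x" using x(1) by (simp add: m_assoc[symmetric])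
  then show "x <# M \<noteq> (x \<otimes> x) <# M" using lcos_eq_iff[OF M x(1)] x by simp
qed

lemma J_cosets:
  assumes M: "subgroup M G" and k: "k \<in> carrier G" and y: "y \<in> J M k"
  shows "y <# M = M \<or> y <# M = k <# M \<or> y <# M = (k \<otimes> k) <# M"
proof -
  obtain i m where ym: "y = k [^] (i::nat) \<otimes> m" "m \<in> M" using y unfolding J_def by blast
  have mc: "m \<in> carrier G" using ym(2) subgroup.mem_carrier[OF M] by blast
  have ki: "k [^] i \<in> carrier G" using k by simp
  have "inv (k [^] i) \<otimes> y = m" using ym(1) ki mc by (simp add: m_assoc[symmetric])
  have yc: "y \<in> carrier G" using ym ki mc by simp
  have "k [^] i <# M = y <# M" using lcos_eq_iff[OF M ki yc] \<open>inv (k [^] i) \<otimes> y = m\<close> ym(2) by simp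
  also have "k [^] i = k [^] (i mod 3)" by (rule pow_mod3[OF k])
  finally have e: "y <# M = k [^] (i mod 3) <# M" by simp
  consider (c0) "i mod 3 = 0" | (c1) "i mod 3 = 1" | (c2) "i mod 3 = 2" by arith
  then show ?thesis
  proof cases
    case c0 then show ?thesis using e one_lcos[OF M] by simp
  next
    case c1 then show ?thesis using e k by simp
  next
    case c2
    have "k [^] (2::nat) = k \<otimes> k" using k by (simp add: numeral_2_eq_2)
    then show ?thesis using e c2 by simp
  qed
qed

lemma max_cosets:
  assumes Mx: "maximal_subgroup G M" and x: "x \<in> carrier G" "x \<notin> M"
  shows "nontrivial_cosets G M = {x <# M, (x \<otimes> x) <# M}"
proof -
  have M: "subgroup M G" using Mx maximal_subgroup_def by blast
  have JS: "subgroup (J M x) G" by (rule J_subgroup[OF M x(1)])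
  have "J M x = M \<or> J M x = carrier G" using Mx JS M_sub_J[OF M] unfolding maximal_subgroup_def by blast
  moreover have "J M x \<noteq> M" using k_in_J[OF M x(1)] x(2) by blast
  ultimately have JG: "J M x = carrier G" by blast
  show ?thesis
  proof
    show "nontrivial_cosets G M \<subseteq> {x <# M, (x \<otimes> x) <# M}"
    proof
      fix C assume "C \<in> nontrivial_cosets G M"
      then obtain g where g: "C = g <# M" "g \<in> carrier G" "g \<notin> M" unfolding nontrivial_cosets_def by blast
      have "g <# M \<noteq> M" using lcos_eq_self_iff[OF M g(2)] g(3) by simp
      then show "C \<in> {x <# M, (x \<otimes> x) <# M}" using J_cosets[OF M x(1), of g] JG g by auto
    qed
    show "{x <# M, (x \<otimes> x) <# M} \<subseteq> nontrivial_cosets G M"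
      unfolding nontrivial_cosets_def using x sq_notin[OF M x] by auto
  qed
qed

lemma max_card:
  assumes Mx: "maximal_subgroup G M"
  shows "card (nontrivial_cosets G M) = 2" "card (carrier G) = 3 * card M"
proof -
  have M: "subgroup M G" using Mx maximal_subgroup_def by blast
  have "M \<noteq> carrier G" using Mx maximal_subgroup_def by blast
  then obtain x where x: "x \<in> carrier G" "x \<notin> M" using subgroup.subset[OF M] by blast
  show c2: "card (nontrivial_cosets G M) = 2"
    using max_cosets[OF Mx x] lcos_distinct(3)[OF M x] by simp
  show "card (carrier G) = 3 * card M" by (rule order3[OF fin M c2])
qed

lemma lcos_image: "Y \<subseteq> carrier G \<Longrightarrow> g <# Y = (\<lambda>x. g \<otimes> x) ` Y"
  unfolding l_coset_def by auto

lemma card_lcos_gen: "Y \<subseteq> carrier G \<Longrightarrow> g \<in> carrier G \<Longrightarrow> card (g <# Y) = card Y"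
proof -
  assume Y: "Y \<subseteq> carrier G" and g: "g \<in> carrier G"
  have "g <# Y = (\<lambda>x. g \<otimes> x) ` Y" by (rule lcos_image[OF Y])
  moreover have "inj_on (\<lambda>x. g \<otimes> x) Y" using inj_on_subset[OF inj_on_cmult[OF g] Y] .
  ultimately show ?thesis by (simp add: card_image)
qed

lemma sf_part:
  assumes T: "sum_free G T" and s: "s \<in> T"
  shows "card (T \<union> (\<lambda>t. s \<otimes> t) ` T \<union> (\<lambda>t. s \<otimes> inv t) ` T) = 3 * card T"
    "T \<union> (\<lambda>t. s \<otimes> t) ` T \<union> (\<lambda>t. s \<otimes> inv t) ` T \<subseteq> carrier G"
proof -
  have Tc: "T \<subseteq> carrier G" using T unfolding sum_free_def by blast
  have sf: "\<And>a b. a \<in> T \<Longrightarrow> b \<in> T \<Longrightarrow> a \<otimes> b \<notin> T" using T unfolding sum_free_def by blast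
  have sc: "s \<in> carrier G" using s Tc by blast
  have fT: "finite T" using Tc fin finite_subset by blast
  define B where "B = (\<lambda>t. s \<otimes> t) ` T"
  define C where "C = (\<lambda>t. s \<otimes> inv t) ` T"
  have iB: "inj_on (\<lambda>t. s \<otimes> t) T" using inj_on_subset[OF inj_on_cmult[OF sc] Tc] .
  have iC: "inj_on (\<lambda>t. s \<otimes> inv t) T"
  proof (rule inj_onI)
    fix t u assume tu: "t \<in> T" "u \<in> T" "s \<otimes> inv t = s \<otimes> inv u"
    have tc: "t \<in> carrier G" "u \<in> carrier G" using tu Tc by auto
    have "inv t = inv u" using l_cancel[OF tu(3) inv_closed[OF tc(1)] inv_closed[OF tc(2)] sc] .
    then have "inv (inv t) = inv (inv u)" by simp
    then show "t = u" using tc by simp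
  qed
  have cB: "card B = card T" unfolding B_def using card_image[OF iB] .
  have cC: "card C = card T" unfolding C_def using card_image[OF iC] .
  have d1: "T \<inter> B = {}"
  proof (rule ccontr)
    assume "T \<inter> B \<noteq> {}"
    then obtain t where "t \<in> T" "s \<otimes> t \<in> T" unfolding B_def by blast
    then show False using sf[OF s] by blast
  qed
  have d2: "(T \<union> B) \<inter> C = {}"
  proof (rule ccontr)
    assume "(T \<union> B) \<inter> C \<noteq> {}"
    then obtain u where u: "u \<in> T" "s \<otimes> inv u \<in> T \<union> B" unfolding C_def by blast
    have uc: "u \<in> carrier G" using u Tc by blast
    show False
    proof (cases "s \<otimes> inv u \<in> T")
      case True
      have "(s \<otimes> inv u) \<otimes> u = s" using sc uc by (simp add: m_assoc)
      then show False using sf[OF True u(1)] s by simp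
    next
      case False
      then obtain t where t: "t \<in> T" "s \<otimes> inv u = s \<otimes> t" using u unfolding B_def by blast
      have tc: "t \<in> carrier G" using t Tc by blast
      have "inv u = t" using l_cancel[OF t(2) inv_closed[OF uc] tc sc] .
      then have "u \<otimes> u = t" using inv_sq[OF uc] by simp
      then show False using sf[OF u(1) u(1)] t by simp
    qed
  qed
  have fB: "finite B" unfolding B_def using fT by simp
  have fC: "finite C" unfolding C_def using fT by simp
  have u1: "card (T \<union> B \<union> C) = card (T \<union> B) + card C"
    using card_Un_disjoint[OF finite_UnI[OF fT fB] fC d2] .
  have u2: "card (T \<union> B) = card T + card B" using card_Un_disjoint[OF fT fB d1] .
  have "card (T \<union> B \<union> C) = 3 * card T" using u1 u2 cB cC by linarith
  then show "card (T \<union> (\<lambda>t. s \<otimes> t) ` T \<union> (\<lambda>t. s \<otimes> inv t) ` T) = 3 * card T"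
    unfolding B_def C_def .
  have "B \<subseteq> carrier G" unfolding B_def by (rule image_subsetI) (use Tc sc in auto)
  moreover have "C \<subseteq> carrier G" unfolding C_def by (rule image_subsetI) (use Tc sc in auto)
  ultimately have "T \<union> B \<union> C \<subseteq> carrier G" using Tc by blast
  then show "T \<union> (\<lambda>t. s \<otimes> t) ` T \<union> (\<lambda>t. s \<otimes> inv t) ` T \<subseteq> carrier G"
    unfolding B_def C_def .
qed

lemma sf_bound:
  assumes T: "sum_free G T" shows "3 * card T \<le> card (carrier G)"
proof -
  obtain s where s: "s \<in> T" using T unfolding sum_free_def by blast
  have "card (T \<union> (\<lambda>t. s \<otimes> t) ` T \<union> (\<lambda>t. s \<otimes> inv t) ` T) \<le> card (carrier G)"
    by (rule card_mono[OF fin sf_part(2)[OF T s]])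
  then show ?thesis using sf_part(1)[OF T s] by simp
qed

lemma sf_cover:
  assumes S: "sum_free G S" and c: "3 * card S = card (carrier G)" and s: "s \<in> S"
  shows "carrier G = S \<union> (\<lambda>t. s \<otimes> t) ` S \<union> (\<lambda>t. s \<otimes> inv t) ` S"
  using card_subset_eq[OF fin sf_part(2)[OF S s]] sf_part(1)[OF S s] c by simp

lemma key_inv:
  assumes S: "sum_free G S" and c: "3 * card S = card (carrier G)" and s: "s \<in> S" and t: "t \<in> S"
  shows "inv (s \<otimes> t) \<in> S"
proof -
  have Sc: "S \<subseteq> carrier G" using S unfolding sum_free_def by blast
  have sf: "\<And>a b. a \<in> S \<Longrightarrow> b \<in> S \<Longrightarrow> a \<otimes> b \<notin> S" using S unfolding sum_free_def by blast
  have sc: "s \<in> carrier G" and tc: "t \<in> carrier G" using s t Sc by auto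
  define x where "x = inv (s \<otimes> t)"
  have xc: "x \<in> carrier G" unfolding x_def using sc tc by simp
  then have "x \<in> S \<union> (\<lambda>t. s \<otimes> t) ` S \<union> (\<lambda>t. s \<otimes> inv t) ` S" using sf_cover[OF S c s] by simp
  moreover have "x \<notin> (\<lambda>t. s \<otimes> t) ` S"
  proof
    assume "x \<in> (\<lambda>t. s \<otimes> t) ` S"
    then obtain u where u: "u \<in> S" "x = s \<otimes> u" by blast
    have uc: "u \<in> carrier G" using u Sc by auto
    have "u = inv s \<otimes> x" using inv_solve_left[OF uc sc xc] u(2) by simp
    then have "u \<otimes> t = inv s \<otimes> (inv s \<otimes> inv t) \<otimes> t" unfolding x_def using sc tc by (simp add: inv_mult)
    also have "\<dots> = inv s \<otimes> inv s" using sc tc by (simp add: m_assoc)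
    also have "\<dots> = s" using inv_sq[OF sc] four[OF sc] by simp
    finally have "u \<otimes> t = s" .
    then show False using sf[OF u(1) t] s by simp
  qed
  moreover have "x \<notin> (\<lambda>t. s \<otimes> inv t) ` S"
  proof
    assume "x \<in> (\<lambda>t. s \<otimes> inv t) ` S"
    then obtain u where u: "u \<in> S" "x = s \<otimes> inv u" by blast
    have uc: "u \<in> carrier G" using u Sc by auto
    have "inv u = inv s \<otimes> x" using inv_solve_left[OF inv_closed[OF uc] sc xc] u(2) by simp
    then have "inv (inv u) = inv (inv s \<otimes> x)" by simp
    then have "u = s \<otimes> inv x" using uc sc xc by (simp add: inv_mult)
    then have "u = s \<otimes> (s \<otimes> t)" unfolding x_def using sc tc by simp
    then have "s \<otimes> u = (s \<otimes> s \<otimes> s) \<otimes> t" using sc tc by (simp add: m_assoc)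
    then have "s \<otimes> u = t" using cube'[OF sc] tc by simp
    then show False using sf[OF s u(1)] t by simp
  qed
  ultimately show ?thesis unfolding x_def by blast
qed

lemma sf_coset:
  assumes S: "sum_free G S" and c: "3 * card S = card (carrier G)"
  shows "\<exists>a H. a \<in> carrier G \<and> subgroup H G \<and> a \<notin> H \<and> S = a <# H \<and> 3 * card H = card (carrier G)"
proof -
  have Sc: "S \<subseteq> carrier G" using S unfolding sum_free_def by blast
  have sf: "\<And>a b. a \<in> S \<Longrightarrow> b \<in> S \<Longrightarrow> a \<otimes> b \<notin> S" using S unfolding sum_free_def by blast
  obtain a where a: "a \<in> S" using S unfolding sum_free_def by blast
  have ac: "a \<in> carrier G" using a Sc by auto
  have iac: "inv a \<in> carrier G" using ac by simp
  define H where "H = inv a <# S"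
  have Hi: "H = (\<lambda>s. inv a \<otimes> s) ` S" unfolding H_def by (rule lcos_image[OF Sc])
  have Hc: "H \<subseteq> carrier G" unfolding Hi by (rule image_subsetI) (use Sc iac in auto)
  have mc: "x \<otimes> y \<in> H" if xy: "x \<in> H" "y \<in> H" for x y
  proof -
    obtain s t where st: "s \<in> S" "t \<in> S" "x = inv a \<otimes> s" "y = inv a \<otimes> t" using xy unfolding Hi by blast
    have sc: "s \<in> carrier G" and tc: "t \<in> carrier G" using st Sc by auto
    have w1: "inv (s \<otimes> t) \<in> S" by (rule key_inv[OF S c st(1,2)])
    have w2: "inv (inv (s \<otimes> t) \<otimes> a) \<in> S" by (rule key_inv[OF S c w1 a])
    have "inv (inv (s \<otimes> t) \<otimes> a) = s \<otimes> t \<otimes> inv a" using sc tc ac by (simp add: inv_mult)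
    then have w3: "s \<otimes> t \<otimes> inv a \<in> S" using w2 by simp
    have "x \<otimes> y = inv a \<otimes> (s \<otimes> t \<otimes> inv a)" unfolding st using sc tc iac by (simp add: m_ac)
    then show ?thesis unfolding Hi using w3 by blast
  qed
  have sH: "subgroup H G"
  proof (rule subgroupI)
    show "H \<subseteq> carrier G" by (rule Hc)
    show "H \<noteq> {}" unfolding Hi using a by blast
    show "inv x \<in> H" if "x \<in> H" for x
      using inv_sq[of x] that Hc mc[OF that that] by auto
    show "x \<otimes> y \<in> H" if "x \<in> H" "y \<in> H" for x y using mc[OF that] .
  qed
  have aH: "a \<notin> H"
  proof
    assume "a \<in> H"
    then obtain s where s: "s \<in> S" "a = inv a \<otimes> s" unfolding Hi by blast
    have sc: "s \<in> carrier G" using s Sc by auto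
    have "s = a \<otimes> a" using inv_solve_left[OF ac ac sc] s(2) by simp
    then show False using sf[OF a a] s(1) by simp
  qed
  have "a <# H = (a \<otimes> inv a) <# S" unfolding H_def using lcos_m_assoc[OF Sc ac iac] .
  also have "\<dots> = S" using ac lcos_mult_one[OF Sc] by simp
  finally have SH: "S = a <# H" by simp
  have "card H = card S" unfolding H_def by (rule card_lcos_gen[OF Sc iac])
  then have c3: "3 * card H = card (carrier G)" using c by simp
  show ?thesis by (rule exI[of _ a], rule exI[of _ H]) (use ac sH aH SH c3 in blast)
qed

lemma max3:
  assumes H: "subgroup H G" and c: "3 * card H = card (carrier G)"
  shows "maximal_subgroup G H"
  unfolding maximal_subgroup_def
proof (intro conjI allI impI)
  show "subgroup H G" by (rule H)
  have fH: "finite H" using fin subgroup.subset[OF H] finite_subset by blast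
  have "H \<noteq> {}" using subgroup.one_closed[OF H] by blast
  then have "card H > 0" using fH by (simp add: card_gt_0_iff)
  then have "card H \<noteq> card (carrier G)" using c by simp
  then show "H \<noteq> carrier G" by blast
  fix K assume K: "subgroup K G \<and> H \<subseteq> K"
  show "K = H \<or> K = carrier G"
  proof (cases "K = H")
    case False
    have KS: "subgroup K G" and HK: "H \<subseteq> K" using K by auto
    from False HK obtain k where k: "k \<in> K" "k \<notin> H" by blast
    have Kc: "K \<subseteq> carrier G" using subgroup.subset[OF KS] .
    have kc: "k \<in> carrier G" using k(1) Kc by blast
    have kkc: "k \<otimes> k \<in> carrier G" using kc by simp
    have c1: "k <# H \<in> lcosets H" "(k \<otimes> k) <# H \<in> lcosets H" "H \<in> lcosets H"
      using lcos_in_lcosets[OF kc] lcos_in_lcosets[OF kkc] lcos_in_lcosets[OF one_closed, of H] one_lcos[OF H] by auto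
    have dd: "k <# H \<noteq> H" "(k \<otimes> k) <# H \<noteq> H" "k <# H \<noteq> (k \<otimes> k) <# H"
      using lcos_distinct[OF H kc k(2)] by auto
    have dj1: "H \<inter> (k <# H) = {}" using lcos_disjoint[OF H c1(3) c1(1)] dd(1) by auto
    have dj2: "(H \<union> (k <# H)) \<inter> ((k \<otimes> k) <# H) = {}"
      using lcos_disjoint[OF H c1(3) c1(2)] lcos_disjoint[OF H c1(1) c1(2)] dd by auto
    have fk1: "finite (k <# H)" using fin l_coset_subset_G[OF subgroup.subset[OF H] kc] finite_subset by blast
    have fk2: "finite ((k \<otimes> k) <# H)" using fin l_coset_subset_G[OF subgroup.subset[OF H] kkc] finite_subset by blast
    have "card (H \<union> (k <# H) \<union> ((k \<otimes> k) <# H)) = card H + card (k <# H) + card ((k \<otimes> k) <# H)"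
      using card_Un_disjoint[OF finite_UnI[OF fH fk1] fk2 dj2] card_Un_disjoint[OF fH fk1 dj1] by simp
    also have "\<dots> = 3 * card H" using card_lcos[OF fin H kc] card_lcos[OF fin H kkc] by simp
    finally have cu: "card (H \<union> (k <# H) \<union> ((k \<otimes> k) <# H)) = card (carrier G)" using c by simp
    have s1: "k <# H \<subseteq> K"
    proof
      fix y assume "y \<in> k <# H"
      then obtain h where h: "h \<in> H" "y = k \<otimes> h" unfolding l_coset_def by blast
      have "h \<in> K" using h(1) HK by blast
      then show "y \<in> K" using h(2) subgroup.m_closed[OF KS k(1)] by simp
    qed
    have s2: "(k \<otimes> k) <# H \<subseteq> K"
    proof
      fix y assume "y \<in> (k \<otimes> k) <# H"
      then obtain h where h: "h \<in> H" "y = k \<otimes> k \<otimes> h" unfolding l_coset_def by blast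
      have "h \<in> K" using h(1) HK by blast
      have "k \<otimes> k \<in> K" using subgroup.m_closed[OF KS k(1) k(1)] .
      then show "y \<in> K" using h(2) subgroup.m_closed[OF KS _ \<open>h \<in> K\<close>] by simp
    qed
    have "H \<union> (k <# H) \<union> ((k \<otimes> k) <# H) \<subseteq> K" using s1 s2 HK by blast
    then have "card (H \<union> (k <# H) \<union> ((k \<otimes> k) <# H)) \<le> card K" by (rule card_mono[OF finite_subset[OF Kc fin]])
    then have "card (carrier G) \<le> card K" using cu by simp
    then have "K = carrier G" using card_seteq[OF fin Kc] by simp
    then show ?thesis by simp
  qed simp
qed

lemma frattini_elem:
  assumes x: "x \<in> carrier G" "x \<noteq> \<one>"
  shows "\<exists>M. maximal_subgroup G M \<and> x \<notin> M"
proof -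
  define P where "P K \<longleftrightarrow> subgroup K G \<and> x \<notin> K" for K
  have bnd: "\<forall>y. P y \<longrightarrow> card y < Suc (card (carrier G))"
  proof (intro allI impI)
    fix y assume "P y"
    then have "y \<subseteq> carrier G" unfolding P_def using subgroup.subset by blast
    then have "card y \<le> card (carrier G)" using fin by (rule card_mono[rotated])
    then show "card y < Suc (card (carrier G))" by simp
  qed
  have P1: "P {\<one>}" unfolding P_def using triv_subgroup x(2) by blast
  obtain M where PM: "P M" and Mmax: "\<forall>y. P y \<longrightarrow> card y \<le> card M"
    using Lattices_Big.ex_has_greatest_nat[of P "{\<one>}" card, OF P1 bnd] by blast
  have M: "subgroup M G" and xM: "x \<notin> M" using PM unfolding P_def by auto
  have Mc: "M \<subseteq> carrier G" using subgroup.subset[OF M] .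
  have fM: "finite M" using fin Mc finite_subset by blast
  have big: "x \<in> K" if K: "subgroup K G" "M \<subseteq> K" "K \<noteq> M" for K
  proof (rule ccontr)
    assume "x \<notin> K"
    then have "P K" unfolding P_def using K by simp
    then have "card K \<le> card M" using Mmax by blast
    moreover have "finite K" using fin subgroup.subset[OF K(1)] finite_subset by blast
    ultimately have "M = K" using card_seteq[OF _ K(2)] by blast
    then show False using K(3) by simp
  qed
  have JG: "J M x = carrier G"
  proof
    show "J M x \<subseteq> carrier G" using subgroup.subset[OF J_subgroup[OF M x(1)]] .
    show "carrier G \<subseteq> J M x"
    proof
      fix y assume y: "y \<in> carrier G"
      show "y \<in> J M x"
      proof (rule ccontr)
        assume yJ: "y \<notin> J M x"
        have yM: "y \<notin> M" using yJ M_sub_J[OF M] by blast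
        have JyS: "subgroup (J M y) G" by (rule J_subgroup[OF M y])
        have "J M y \<noteq> M" using k_in_J[OF M y] yM by blast
        then have "x \<in> J M y" using big[OF JyS M_sub_J[OF M]] by blast
        then obtain i m where im: "x = y [^] (i::nat) \<otimes> m" "m \<in> M" unfolding J_def by blast
        have mc: "m \<in> carrier G" using im(2) Mc by blast
        have yi: "y [^] i \<in> carrier G" using y by simp
        have "y [^] i = x \<otimes> inv m" using im(1) yi mc by (simp add: m_assoc)
        moreover have "x \<otimes> inv m \<in> J M x"
        proof -
          have "inv m \<in> J M x" using M_sub_J[OF M] subgroup.m_inv_closed[OF M im(2)] by blast
          then show ?thesis using subgroup.m_closed[OF J_subgroup[OF M x(1)] k_in_J[OF M x(1)]] by blast
        qed
        ultimately have yiJ: "y [^] i \<in> J M x" by simp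
        have "i mod 3 \<noteq> 0"
        proof
          assume "i mod 3 = 0"
          then have "y [^] i = \<one>" using pow_mod3[OF y, of i] by simp
          then have "x = m" using im(1) mc by simp
          then show False using xM im(2) by simp
        qed
        then have "(i * i) mod 3 = 1"
        proof -
          assume "i mod 3 \<noteq> 0"
          then have "i mod 3 = 1 \<or> i mod 3 = 2" by arith
          moreover have "(i * i) mod 3 = ((i mod 3) * (i mod 3)) mod 3" by (simp add: mod_mult_eq)
          ultimately show ?thesis by auto
        qed
        have "(y [^] i) [^] i \<in> J M x" by (rule subgroup_pow_closed[OF J_subgroup[OF M x(1)] yiJ])
        moreover have "(y [^] i) [^] i = y"
        proof -
          have "(y [^] i) [^] i = y [^] (i * i)" using nat_pow_pow[OF y] by simp
          also have "\<dots> = y [^] ((i * i) mod 3)" by (rule pow_mod3[OF y])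
          also have "\<dots> = y" using \<open>(i * i) mod 3 = 1\<close> y by simp
          finally show ?thesis .
        qed
        ultimately show False using yJ by simp
      qed
    qed
  qed
  have "maximal_subgroup G M"
    unfolding maximal_subgroup_def
  proof (intro conjI allI impI)
    show "subgroup M G" by (rule M)
    show "M \<noteq> carrier G" using xM x(1) by blast
    fix K assume K: "subgroup K G \<and> M \<subseteq> K"
    show "K = M \<or> K = carrier G"
    proof (cases "K = M")
      case False
      have KS: "subgroup K G" and MK: "M \<subseteq> K" using K by auto
      have "x \<in> K" using big[OF KS MK False] .
      then have "J M x \<subseteq> K" using J_sub[OF KS MK] by blast
      then have "K = carrier G" using JG subgroup.subset[OF KS] by blast
      then show ?thesis by simp
    qed simp
  qed
  then show ?thesis using xM by blast
qed

end

lemma (in group) backward: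
  assumes fin: "finite (carrier G)"
    and A: "\<forall>M. maximal_subgroup G M \<longrightarrow> card (nontrivial_cosets G M) = 2"
    and F: "frattini G = {\<one>}"
  shows "elementary_abelian_3_group G"
proof -
  have triv: "z = \<one>" if z: "z \<in> carrier G" "\<And>M. maximal_subgroup G M \<Longrightarrow> z \<in> M" for z
  proof -
    have "z \<in> frattini G" unfolding frattini_def using z by blast
    then show ?thesis using F by simp
  qed
  have comm: "x \<otimes> y = y \<otimes> x" if xy: "x \<in> carrier G" "y \<in> carrier G" for x y
  proof -
    have c1: "x \<otimes> y \<otimes> inv x \<otimes> inv y = \<one>"
      using triv[of "x \<otimes> y \<otimes> inv x \<otimes> inv y"] key_max[OF fin A] xy by simp
    have "inv (inv y) = x \<otimes> y \<otimes> inv x" by (rule inv_equality[OF c1]) (use xy in simp_all)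
    then have yy: "y = x \<otimes> y \<otimes> inv x" using xy by simp
    have "y \<otimes> x = x \<otimes> y \<otimes> inv x \<otimes> x" using yy by simp
    also have "\<dots> = x \<otimes> y" using xy by (simp add: m_assoc)
    finally show ?thesis by simp
  qed
  have cube: "x [^] (3::nat) = \<one>" if x: "x \<in> carrier G" for x
    using triv[of "x [^] (3::nat)"] key_max[OF fin A] x by simp
  show ?thesis unfolding elementary_abelian_3_group_def
    using group_comm_groupI[OF comm] cube by blast
qed

lemma (in exp3_group) forward:
  shows "(\<forall>M. maximal_subgroup G M \<longrightarrow>
        card (nontrivial_cosets G M) = 2 \<and>
        (\<forall>C\<in>nontrivial_cosets G M. max_sum_free G C)) \<and>
     (\<forall>S. max_sum_free G S \<longrightarrow>
        (\<exists>M. maximal_subgroup G M \<and> S \<in> nontrivial_cosets G M)) \<and>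
     frattini G = {\<one>}"
proof (intro conjI allI impI ballI)
  fix M assume Mx: "maximal_subgroup G M"
  have M: "subgroup M G" using Mx unfolding maximal_subgroup_def by blast
  show "card (nontrivial_cosets G M) = 2" by (rule max_card(1)[OF Mx])
  fix C assume "C \<in> nontrivial_cosets G M"
  then obtain g where g: "C = g <# M" "g \<in> carrier G" "g \<notin> M" unfolding nontrivial_cosets_def by blast
  have sC: "sum_free G C" unfolding g(1) by (rule sum_free_coset[OF M g(2,3)])
  have cC: "card C = card M" unfolding g(1) by (rule card_lcos[OF fin M g(2)])
  show "max_sum_free G C" unfolding max_sum_free_def
  proof (intro conjI allI impI)
    show "sum_free G C" by (rule sC)
    fix T assume "sum_free G T"
    then have "3 * card T \<le> card (carrier G)" by (rule sf_bound)
    then show "card T \<le> card C" using max_card(2)[OF Mx] cC by simp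
  qed
next
  fix S assume mS: "max_sum_free G S"
  have S: "sum_free G S" using mS unfolding max_sum_free_def by blast
  have Sm: "\<And>T. sum_free G T \<Longrightarrow> card T \<le> card S" using mS unfolding max_sum_free_def by blast
  obtain s where s: "s \<in> S" using S unfolding sum_free_def by blast
  have sc: "s \<in> carrier G" using s S unfolding sum_free_def by blast
  have "s \<noteq> \<one>"
  proof
    assume "s = \<one>"
    then have "s \<otimes> s \<in> S" using s by simp
    then show False using s S unfolding sum_free_def by blast
  qed
  then have "{\<one>} \<noteq> carrier G" using sc by blast
  then obtain M where Mx: "maximal_subgroup G M" using exists_maximal[OF fin triv_subgroup] by blast
  have M: "subgroup M G" using Mx unfolding maximal_subgroup_def by blast
  have "M \<noteq> carrier G" using Mx unfolding maximal_subgroup_def by blast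
  then obtain x where x: "x \<in> carrier G" "x \<notin> M" using subgroup.subset[OF M] by blast
  have "card (x <# M) \<le> card S" by (rule Sm[OF sum_free_coset[OF M x]])
  then have "card M \<le> card S" using card_lcos[OF fin M x(1)] by simp
  then have "card (carrier G) \<le> 3 * card S" using max_card(2)[OF Mx] by simp
  then have c3: "3 * card S = card (carrier G)" using sf_bound[OF S] by simp
  obtain a H where aH: "a \<in> carrier G" "subgroup H G" "a \<notin> H" "S = a <# H" "3 * card H = card (carrier G)"
    using sf_coset[OF S c3] by blast
  have "maximal_subgroup G H" by (rule max3[OF aH(2) aH(5)])
  moreover have "S \<in> nontrivial_cosets G H" unfolding nontrivial_cosets_def using aH by blast
  ultimately show "\<exists>M. maximal_subgroup G M \<and> S \<in> nontrivial_cosets G M" by blast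
next
  show "frattini G = {\<one>}"
  proof
    show "frattini G \<subseteq> {\<one>}"
    proof
      fix y assume y: "y \<in> frattini G"
      then have yc: "y \<in> carrier G" and yM: "\<And>M. maximal_subgroup G M \<Longrightarrow> y \<in> M"
        unfolding frattini_def by auto
      show "y \<in> {\<one>}"
      proof (rule ccontr)
        assume "y \<notin> {\<one>}"
        then obtain M where "maximal_subgroup G M" "y \<notin> M" using frattini_elem[OF yc] by blast
        then show False using yM by blast
      qed
    qed
    have "\<And>M. maximal_subgroup G M \<Longrightarrow> \<one> \<in> M"
      unfolding maximal_subgroup_def using subgroup.one_closed by blast
    then show "{\<one>} \<subseteq> frattini G" unfolding frattini_def by auto
  qed
qed

theorem theorem1:
  fixes G (structure)
  assumes "group G" and "finite (carrier G)"
  shows "elementary_abelian_3_group G \<longleftrightarrow>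
    ((\<forall>M. maximal_subgroup G M \<longrightarrow>
        card (nontrivial_cosets G M) = 2 \<and>
        (\<forall>C\<in>nontrivial_cosets G M. max_sum_free G C)) \<and>
     (\<forall>S. max_sum_free G S \<longrightarrow>
        (\<exists>M. maximal_subgroup G M \<and> S \<in> nontrivial_cosets G M)) \<and>
     frattini G = {\<one>})"
proof
  assume E: "elementary_abelian_3_group G"
  have "exp3_group G"
    using E assms(2) unfolding elementary_abelian_3_group_def exp3_group_def exp3_group_axioms_def by blast
  then show "(\<forall>M. maximal_subgroup G M \<longrightarrow>
        card (nontrivial_cosets G M) = 2 \<and>
        (\<forall>C\<in>nontrivial_cosets G M. max_sum_free G C)) \<and>
     (\<forall>S. max_sum_free G S \<longrightarrow>
        (\<exists>M. maximal_subgroup G M \<and> S \<in> nontrivial_cosets G M)) \<and>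
     frattini G = {\<one>}" by (rule exp3_group.forward)
next
  assume C: "(\<forall>M. maximal_subgroup G M \<longrightarrow>
        card (nontrivial_cosets G M) = 2 \<and>
        (\<forall>C\<in>nontrivial_cosets G M. max_sum_free G C)) \<and>
     (\<forall>S. max_sum_free G S \<longrightarrow>
        (\<exists>M. maximal_subgroup G M \<and> S \<in> nontrivial_cosets G M)) \<and>
     frattini G = {\<one>}"
  have A: "\<forall>M. maximal_subgroup G M \<longrightarrow> card (nontrivial_cosets G M) = 2" using C by blast
  have F: "frattini G = {\<one>}" using C by blast
  show "elementary_abelian_3_group G" by (rule group.backward[OF assms(1) assms(2) A F])
qed

end
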